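(* Let $P\in\mathbb{R}_+^{n\times n}$ be sub-stochastic and $w\in\mathbb{R}^n_+$. For $c\in\mathbb{R}^n$ let $\underline x(c)$ and $\overline x(c)$ be the minimal and maximal solutions (entrywise order) of $x=S_0^w(P'x+c)$. Let $\mathcal T\cup\mathcal S_1\cup\dots\cup\mathcal S_m$ be the partition of $\{1,\dots,n\}$ into the transient part and the irreducible trapping sets of $\mathcal G_P$, and for each $l$ let $\pi^{(l)}$ be the invariant probability vector of the block $P_{\mathcal S_l\mathcal S_l}$ (i.e. $\pi^{(l)}\ge0$, $\mathbbm{1}'\pi^{(l)}=1$, $(P_{\mathcal S_l\mathcal S_l})'\pi^{(l)}=\pi^{(l)}$). Then for $p\ge1$, $$\max_{c\in\mathbb{R}^n}\|\overline x(c)-\underline x(c)\|_p^p=\sum_{l=1}^m\left(\min_{i\in\mathcal S_l}\frac{w_i}{\pi^{(l)}_i}\right)^p\|\pi^{(l)}\|_p^p.$$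
   Context: $P$ sub-stochastic: nonnegative with $P\mathbbm{1}\le\mathbbm{1}$. $(S_0^w(x))_i=\min\{\max\{x_i,0\},w_i\}$; $'$ is transpose; $P_{\mathcal A\mathcal B}$ is the restriction of $P$ to rows $\mathcal A$ and columns $\mathcal B$. The graph $\mathcal G_P$ has nodes $\{1,\dots,n\}$ and a link $(i,j)$ iff $P_{ij}>0$. A trapping set is a nonempty $\mathcal S$ with $P_{ij}=0$ for $i\in\mathcal S$, $j\notin\mathcal S$; irreducible if it strictly contains no other trapping set; the transient part is the set of nodes in no irreducible trapping set. The statement presupposes (as the paper does) that each block $P_{\mathcal S_l\mathcal S_l}$ has an invariant probability vector $\pi^{(l)}$. *)

theory Defs
  imports "HOL-Analysis.Analysis"
begin

text \<open>Matrices are real^'n^'n, indexed by a finite type 'n standing for {1..n}.\<close>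

definition substochastic :: "real^'n^'n \<Rightarrow> bool" where
  "substochastic P \<longleftrightarrow> (\<forall>i j. 0 \<le> P$i$j) \<and> (\<forall>i. (\<Sum>j\<in>UNIV. P$i$j) \<le> 1)"

definition sat0 :: "real^'n \<Rightarrow> real^'n \<Rightarrow> real^'n" where
  "sat0 w x = (\<chi> i. min (max (x$i) 0) (w$i))"

definition is_solution :: "real^'n^'n \<Rightarrow> real^'n \<Rightarrow> real^'n \<Rightarrow> real^'n \<Rightarrow> bool" where
  "is_solution P w c x \<longleftrightarrow> x = sat0 w (transpose P *v x + c)"

definition vec_le :: "real^'n \<Rightarrow> real^'n \<Rightarrow> bool" where
  "vec_le x y \<longleftrightarrow> (\<forall>i. x$i \<le> y$i)"

definition is_min_solution :: "real^'n^'n \<Rightarrow> real^'n \<Rightarrow> real^'n \<Rightarrow> real^'n \<Rightarrow> bool" where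
  "is_min_solution P w c x \<longleftrightarrow> is_solution P w c x \<and> (\<forall>y. is_solution P w c y \<longrightarrow> vec_le x y)"

definition is_max_solution :: "real^'n^'n \<Rightarrow> real^'n \<Rightarrow> real^'n \<Rightarrow> real^'n \<Rightarrow> bool" where
  "is_max_solution P w c x \<longleftrightarrow> is_solution P w c x \<and> (\<forall>y. is_solution P w c y \<longrightarrow> vec_le y x)"

definition link :: "real^'n^'n \<Rightarrow> 'n \<Rightarrow> 'n \<Rightarrow> bool" where
  "link P i j \<longleftrightarrow> P$i$j > 0"

definition trapping_set :: "real^'n^'n \<Rightarrow> 'n set \<Rightarrow> bool" where
  "trapping_set P S \<longleftrightarrow> S \<noteq> {} \<and> (\<forall>i\<in>S. \<forall>j. j \<notin> S \<longrightarrow> \<not> link P i j)"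

definition irreducible_trapping_set :: "real^'n^'n \<Rightarrow> 'n set \<Rightarrow> bool" where
  "irreducible_trapping_set P S \<longleftrightarrow>
     trapping_set P S \<and> \<not> (\<exists>S'. trapping_set P S' \<and> S' \<subset> S)"

definition invariant_prob :: "real^'n^'n \<Rightarrow> 'n set \<Rightarrow> ('n \<Rightarrow> real) \<Rightarrow> bool" where
  "invariant_prob P S \<pi> \<longleftrightarrow>
     (\<forall>i\<in>S. 0 \<le> \<pi> i) \<and> (\<Sum>i\<in>S. \<pi> i) = 1 \<and>
     (\<forall>j\<in>S. (\<Sum>i\<in>S. P$i$j * \<pi> i) = \<pi> j)"

definition pnorm_pow :: "real \<Rightarrow> real^'n \<Rightarrow> real" where
  "pnorm_pow p v = (\<Sum>i\<in>UNIV. \<bar>v$i\<bar> powr p)"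

end

theory Submission
  imports Defs
begin


lemma tr_mult: "(transpose P *v x)$j = (\<Sum>i\<in>UNIV. P$i$j * x$i)"
  by (simp add: matrix_vector_mult_def transpose_def)

lemma trapping_Inter:
  assumes "i \<in> \<Inter>F" "\<forall>A\<in>F. trapping_set P A"
  shows "trapping_set P (\<Inter>F)"
  using assms unfolding trapping_set_def by blast

lemma irr_eq:
  assumes "irreducible_trapping_set P S1" "irreducible_trapping_set P S2" "S1 \<inter> S2 \<noteq> {}"
  shows "S1 = S2"
proof -
  have t: "trapping_set P (S1 \<inter> S2)"
    using assms unfolding irreducible_trapping_set_def trapping_set_def by blast
  have "\<not> (S1 \<inter> S2 \<subset> S1)" "\<not> (S1 \<inter> S2 \<subset> S2)"
    using assms(1,2) t unfolding irreducible_trapping_set_def by blast+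
  then show ?thesis by blast
qed

lemma irr_zero:
  fixes P :: "real^'n^'n" and v :: "'n \<Rightarrow> real"
  assumes nn: "\<forall>i j. 0 \<le> P$i$j" and irr: "irreducible_trapping_set P S"
    and vnn: "\<forall>i\<in>S. 0 \<le> v i" and inv: "\<forall>j\<in>S. (\<Sum>i\<in>S. P$i$j * v i) = v j"
    and k: "k \<in> S" "v k = 0"
  shows "\<forall>i\<in>S. v i = 0"
proof (rule ccontr)
  assume neg: "\<not> ?thesis"
  define N where "N = {i\<in>S. v i = 0}"
  have ne: "S - N \<noteq> {}" using neg N_def by blast
  have cl: "\<not> link P i j" if i: "i \<in> S - N" and j: "j \<notin> S - N" for i j
  proof (cases "j \<in> S")
    case False
    then show ?thesis using irr i unfolding irreducible_trapping_set_def trapping_set_def by blast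
  next
    case True
    then have jN: "v j = 0" using j N_def by blast
    have "(\<Sum>i\<in>S. P$i$j * v i) = 0" using inv True jN by simp
    moreover have "\<forall>i'\<in>S. 0 \<le> P$i'$j * v i'" using nn vnn by simp
    ultimately have "P$i$j * v i = 0" using i by (simp add: sum_nonneg_eq_0_iff)
    moreover have "v i > 0" using i vnn N_def by force
    ultimately show ?thesis by (simp add: link_def)
  qed
  have "trapping_set P (S - N)" using ne cl unfolding trapping_set_def by blast
  moreover have "S - N \<subset> S" using k N_def by blast
  ultimately show False using irr unfolding irreducible_trapping_set_def by blast
qed

lemma pi_pos:
  fixes P :: "real^'n^'n"
  assumes nn: "\<forall>i j. 0 \<le> P$i$j" and irr: "irreducible_trapping_set P S"
    and ip: "invariant_prob P S q"
  shows "\<forall>i\<in>S. q i > 0"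
proof (rule ccontr)
  assume "\<not> ?thesis"
  then obtain k where k: "k \<in> S" "\<not> q k > 0" by blast
  have q0: "\<forall>i\<in>S. 0 \<le> q i" using ip unfolding invariant_prob_def by blast
  then have "q k = 0" using k by force
  then have "\<forall>i\<in>S. q i = 0"
    using irr_zero[OF nn irr q0 _ k(1)] ip unfolding invariant_prob_def by blast
  then have "(\<Sum>i\<in>S. q i) = 0" by simp
  then show False using ip unfolding invariant_prob_def by simp
qed

lemma flow:
  fixes P :: "real^'n^'n" and dd :: "'n \<Rightarrow> real"
  assumes nn: "\<forall>i j. 0 \<le> P$i$j" and rs: "\<forall>i. (\<Sum>j\<in>UNIV. P$i$j) \<le> 1"
    and pos: "\<forall>i\<in>B. dd i > 0" and inv: "\<forall>j\<in>B. dd j = (\<Sum>i\<in>B. P$i$j * dd i)"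
    and i: "i \<in> B" and j: "j \<notin> B"
  shows "P$i$j = 0"
proof -
  have fB: "finite B" by simp
  have "(\<Sum>j\<in>B. dd j) = (\<Sum>j\<in>B. \<Sum>i\<in>B. P$i$j * dd i)" using inv by simp
  also have "\<dots> = (\<Sum>i\<in>B. dd i * (\<Sum>j\<in>B. P$i$j))"
    by (subst sum.swap) (simp add: sum_distrib_left mult.commute)
  finally have e: "(\<Sum>i\<in>B. dd i * (1 - (\<Sum>j\<in>B. P$i$j))) = 0"
    by (simp add: right_diff_distrib sum_subtractf)
  have le: "(\<Sum>j\<in>B. P$i$j) \<le> 1" for i
  proof -
    have "(\<Sum>j\<in>B. P$i$j) \<le> (\<Sum>j\<in>UNIV. P$i$j)" by (rule sum_mono2) (use nn in auto)
    then show ?thesis using rs by (meson order_trans)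
  qed
  have "\<forall>i\<in>B. 0 \<le> dd i * (1 - (\<Sum>j\<in>B. P$i$j))" using pos le by (simp add: less_imp_le)
  then have "dd i * (1 - (\<Sum>j\<in>B. P$i$j)) = 0" using e i fB by (simp add: sum_nonneg_eq_0_iff)
  then have s1: "(\<Sum>j\<in>B. P$i$j) = 1" using pos i by force
  have "(\<Sum>j\<in>UNIV. P$i$j) = (\<Sum>j\<in>B. P$i$j) + (\<Sum>j\<in>UNIV - B. P$i$j)"
    by (metis add.commute finite sum.subset_diff top_greatest)
  then have "(\<Sum>j\<in>UNIV - B. P$i$j) = 0" using rs s1 nn
    by (smt (verit, del_insts) sum_nonneg)
  then show ?thesis using j nn by (simp add: sum_nonneg_eq_0_iff)
qed



lemma support_lemmas:
  fixes P :: "real^'n^'n" and dd :: "'n \<Rightarrow> real"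
  assumes nn: "\<forall>i j. 0 \<le> P$i$j" and rs: "\<forall>i. (\<Sum>j\<in>UNIV. P$i$j) \<le> 1"
    and dnn: "\<forall>i. 0 \<le> dd i" and dsub: "\<forall>j. dd j \<le> (\<Sum>i\<in>UNIV. P$i$j * dd i)"
  shows "(\<forall>j. dd j = (\<Sum>i\<in>UNIV. P$i$j * dd i)) \<and>
         (\<forall>i. dd i > 0 \<longrightarrow> (\<exists>S. irreducible_trapping_set P S \<and> i \<in> S))"
proof -
  have "(\<Sum>j\<in>UNIV. \<Sum>i\<in>UNIV. P$i$j * dd i) = (\<Sum>i\<in>UNIV. dd i * (\<Sum>j\<in>UNIV. P$i$j))"
    by (subst sum.swap) (simp add: sum_distrib_left mult.commute)
  also have "\<dots> \<le> (\<Sum>i\<in>UNIV. dd i)"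
    by (rule sum_mono) (simp add: dnn mult_left_le rs)
  finally have "(\<Sum>j\<in>UNIV. (\<Sum>i\<in>UNIV. P$i$j * dd i) - dd j) \<le> 0"
    by (simp add: sum_subtractf)
  moreover have "\<forall>j\<in>UNIV. 0 \<le> (\<Sum>i\<in>UNIV. P$i$j * dd i) - dd j" using dsub by simp
  moreover have "0 \<le> (\<Sum>j\<in>UNIV. (\<Sum>i\<in>UNIV. P$i$j * dd i) - dd j)"
    by (rule sum_nonneg) (use dsub in simp)
  ultimately have "(\<Sum>j\<in>UNIV. (\<Sum>i\<in>UNIV. P$i$j * dd i) - dd j) = 0"
    by linarith
  then have deq: "\<forall>j. dd j = (\<Sum>i\<in>UNIV. P$i$j * dd i)"
    using \<open>\<forall>j\<in>UNIV. 0 \<le> _\<close> by (simp add: sum_nonneg_eq_0_iff)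
  define Q where "Q = {i. dd i > 0}"
  have off: "i \<notin> Q \<Longrightarrow> dd i = 0" for i using dnn[rule_format, of i] Q_def by auto
  have compl: "\<forall>i\<in>Q - A. \<forall>j. j \<notin> Q - A \<longrightarrow> P$i$j = 0"
    if AQ: "A \<subseteq> Q" and Acl: "\<forall>i\<in>A. \<forall>j. j \<notin> A \<longrightarrow> P$i$j = 0" for A
  proof (intro ballI allI impI)
    fix i j assume i: "i \<in> Q - A" and j: "j \<notin> Q - A"
    have inv: "\<forall>j\<in>Q - A. dd j = (\<Sum>i\<in>Q - A. P$i$j * dd i)"
    proof
      fix j assume j: "j \<in> Q - A"
      have "(\<Sum>i\<in>Q - A. P$i$j * dd i) = (\<Sum>i\<in>UNIV. P$i$j * dd i)"
      proof (rule sum.mono_neutral_left)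
        show "\<forall>i\<in>UNIV - (Q - A). P$i$j * dd i = 0"
        proof
          fix i assume "i \<in> UNIV - (Q - A)"
          then have "i \<notin> Q \<or> i \<in> A" by blast
          then show "P$i$j * dd i = 0"
          proof
            assume "i \<notin> Q" then show ?thesis using off by simp
          next
            assume "i \<in> A" then show ?thesis using Acl j by simp
          qed
        qed
      qed simp_all
      then show "dd j = (\<Sum>i\<in>Q - A. P$i$j * dd i)" using deq[rule_format, of j] by linarith
    qed
    show "P$i$j = 0"
      by (rule flow[OF nn rs _ inv i j]) (simp add: Q_def)
  qed
  have Qcl: "\<forall>i\<in>Q. \<forall>j. j \<notin> Q \<longrightarrow> P$i$j = 0" using compl[of "{}"] by simp
  have cover: "\<exists>S. irreducible_trapping_set P S \<and> i \<in> S" if iQ: "i \<in> Q" for i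
  proof -
    define F where "F = {A. trapping_set P A \<and> i \<in> A}"
    define M where "M = \<Inter>F"
    have iM: "i \<in> M" unfolding M_def F_def by blast
    have tM: "trapping_set P M" unfolding M_def by (rule trapping_Inter[of i]) (use iM M_def F_def in simp_all)
    have tQ: "trapping_set P Q" using iQ Qcl unfolding trapping_set_def link_def by (metis empty_iff less_irrefl)
    then have MQ: "M \<subseteq> Q" unfolding M_def F_def using iQ by blast
    have "\<not> (\<exists>B. trapping_set P B \<and> B \<subset> M)"
    proof
      assume "\<exists>B. trapping_set P B \<and> B \<subset> M"
      then obtain B where tB: "trapping_set P B" and BM: "B \<subset> M" by blast
      show False
      proof (cases "i \<in> B")
        case True
        then have "M \<subseteq> B" unfolding M_def F_def using tB by blast
        then show False using BM by blast
      next
        case False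
        have BQ: "B \<subseteq> Q" using BM MQ by blast
        have Bcl: "\<forall>i\<in>B. \<forall>j. j \<notin> B \<longrightarrow> P$i$j = 0"
          using tB nn unfolding trapping_set_def link_def by (metis not_less order.antisym)
        have "trapping_set P (Q - B)"
          using compl[OF BQ Bcl] False iQ unfolding trapping_set_def link_def by (metis Diff_iff empty_iff less_irrefl)
        then have "M \<subseteq> Q - B" unfolding M_def F_def using False iQ by blast
        moreover have "B \<noteq> {}" using tB unfolding trapping_set_def by blast
        ultimately show False using BM by blast
      qed
    qed
    then have "irreducible_trapping_set P M" using tM unfolding irreducible_trapping_set_def by blast
    then show ?thesis using iM by blast
  qed
  show ?thesis using deq cover Q_def by blast
qed



lemma decomp:
  fixes P :: "real^'n^'n" and f :: "'n \<Rightarrow> real"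
  assumes "\<forall>i. (\<forall>S. irreducible_trapping_set P S \<longrightarrow> i \<notin> S) \<longrightarrow> f i = 0"
  shows "(\<Sum>i\<in>UNIV. f i) = (\<Sum>S\<in>{S. irreducible_trapping_set P S}. \<Sum>i\<in>S. f i)"
proof -
  let ?C = "{S. irreducible_trapping_set P S}"
  have "(\<Sum>i\<in>UNIV. f i) = (\<Sum>i\<in>\<Union>?C. f i)"
    by (rule sum.mono_neutral_right) (use assms in auto)
  also have "\<dots> = sum (sum f) ?C"
  proof -
    have "\<forall>A\<in>?C. \<forall>B\<in>?C. A \<noteq> B \<longrightarrow> A \<inter> B = {}" using irr_eq by blast
    then show ?thesis using sum.Union_disjoint[of ?C f] by simp
  qed
  finally show ?thesis by simp
qed

lemma per_S:
  fixes P :: "real^'n^'n" and w :: "real^'n" and dd :: "'n \<Rightarrow> real" and q :: "'n \<Rightarrow> real"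
  assumes nn: "\<forall>i j. 0 \<le> P$i$j" and irr: "irreducible_trapping_set P S"
    and ip: "invariant_prob P S q"
    and dnn: "\<forall>i. 0 \<le> dd i" and dw: "\<forall>i. dd i \<le> w$i"
    and deq: "\<forall>j. dd j = (\<Sum>i\<in>UNIV. P$i$j * dd i)"
    and cover: "\<forall>i. dd i > 0 \<longrightarrow> (\<exists>S. irreducible_trapping_set P S \<and> i \<in> S)"
    and p: "1 \<le> p"
  shows "(\<Sum>i\<in>S. \<bar>dd i\<bar> powr p) \<le> Min ((\<lambda>i. w$i / q i) ` S) powr p * (\<Sum>i\<in>S. \<bar>q i\<bar> powr p)"
proof -
  have qpos: "\<forall>i\<in>S. q i > 0" by (rule pi_pos[OF nn irr ip])
  have Sne: "S \<noteq> {}" using irr unfolding irreducible_trapping_set_def trapping_set_def by blast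
  have fS: "finite S" by simp
  have invS: "(\<Sum>i\<in>S. P$i$j * dd i) = dd j" if j: "j \<in> S" for j
  proof -
    have "(\<Sum>i\<in>S. P$i$j * dd i) = (\<Sum>i\<in>UNIV. P$i$j * dd i)"
    proof (rule sum.mono_neutral_left)
      show "\<forall>i\<in>UNIV - S. P$i$j * dd i = 0"
      proof
        fix i assume i: "i \<in> UNIV - S"
        show "P$i$j * dd i = 0"
        proof (rule ccontr)
          assume ne: "P$i$j * dd i \<noteq> 0"
          then have "dd i > 0" using dnn[rule_format, of i] by force
          then obtain S' where S': "irreducible_trapping_set P S'" "i \<in> S'" using cover by blast
          have "P$i$j > 0" using ne nn[rule_format, of i j] by force
          then have "j \<in> S'" using S' unfolding irreducible_trapping_set_def trapping_set_def link_def by blast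
          then have "S' = S" using irr_eq[OF S'(1) irr] j by blast
          then show False using i S' by blast
        qed
      qed
    qed simp_all
    then show ?thesis using deq[rule_format, of j] by linarith
  qed
  define t where "t = Min ((\<lambda>i. dd i / q i) ` S)"
  have "t \<in> (\<lambda>i. dd i / q i) ` S" unfolding t_def using Sne fS by (intro Min_in) auto
  then obtain k where k: "k \<in> S" "t = dd k / q k" by blast
  have tle: "t \<le> dd i / q i" if "i \<in> S" for i unfolding t_def using that fS by simp
  have t0: "0 \<le> t" using k dnn[rule_format, of k] qpos by (simp add: less_imp_le)
  define e where "e i = dd i - t * q i" for i
  have enn: "\<forall>i\<in>S. 0 \<le> e i"
    using tle qpos unfolding e_def by (simp add: pos_le_divide_eq)
  have qinv: "\<forall>j\<in>S. (\<Sum>i\<in>S. P$i$j * q i) = q j" using ip unfolding invariant_prob_def by blast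
  have einv: "\<forall>j\<in>S. (\<Sum>i\<in>S. P$i$j * e i) = e j"
  proof
    fix j assume j: "j \<in> S"
    have "(\<Sum>i\<in>S. P$i$j * e i) = (\<Sum>i\<in>S. P$i$j * dd i) - t * (\<Sum>i\<in>S. P$i$j * q i)"
      unfolding e_def by (simp add: right_diff_distrib sum_subtractf sum_distrib_left algebra_simps)
    also have "\<dots> = e j" using invS[OF j] qinv j unfolding e_def by simp
    finally show "(\<Sum>i\<in>S. P$i$j * e i) = e j" .
  qed
  have ek: "e k = 0" using k qpos unfolding e_def by force
  have e0: "\<forall>i\<in>S. e i = 0" by (rule irr_zero[OF nn irr enn einv k(1) ek])
  then have dS: "\<forall>i\<in>S. dd i = t * q i" unfolding e_def by simp
  have tmin: "t \<le> Min ((\<lambda>i. w$i / q i) ` S)"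
  proof (subst Min_ge_iff)
    show "\<forall>a\<in>(\<lambda>i. w$i / q i) ` S. t \<le> a"
    proof
      fix a assume "a \<in> (\<lambda>i. w$i / q i) ` S"
      then obtain i where i: "i \<in> S" "a = w$i / q i" by blast
      have "t * q i \<le> w$i" using dS dw i by metis
      then show "t \<le> a" using i qpos by (simp add: pos_le_divide_eq)
    qed
  qed (use fS Sne in simp_all)
  have "(\<Sum>i\<in>S. \<bar>dd i\<bar> powr p) = (\<Sum>i\<in>S. t powr p * \<bar>q i\<bar> powr p)"
  proof (rule sum.cong)
    fix i assume i: "i \<in> S"
    have "\<bar>dd i\<bar> = t * \<bar>q i\<bar>" using dS i qpos t0 by (simp add: abs_mult)
    then show "\<bar>dd i\<bar> powr p = t powr p * \<bar>q i\<bar> powr p" using t0 by (simp add: powr_mult)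
  qed simp
  also have "\<dots> = t powr p * (\<Sum>i\<in>S. \<bar>q i\<bar> powr p)" by (simp add: sum_distrib_left)
  also have "\<dots> \<le> Min ((\<lambda>i. w$i / q i) ` S) powr p * (\<Sum>i\<in>S. \<bar>q i\<bar> powr p)"
    by (rule mult_right_mono) (use tmin t0 p in \<open>simp_all add: powr_mono2 sum_nonneg\<close>)
  finally show ?thesis .
qed



lemma sat_lip: "min (max (a::real) 0) w - min (max b 0) w \<le> \<bar>a - b\<bar>"
  by (simp add: min_def max_def abs_if)

lemma upper:
  fixes P :: "real^'n^'n" and w :: "real^'n" and dd :: "'n \<Rightarrow> real" and \<pi> :: "'n set \<Rightarrow> 'n \<Rightarrow> real"
  assumes nn: "\<forall>i j. 0 \<le> P$i$j" and rs: "\<forall>i. (\<Sum>j\<in>UNIV. P$i$j) \<le> 1"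
    and dnn: "\<forall>i. 0 \<le> dd i" and dw: "\<forall>i. dd i \<le> w$i"
    and dsub: "\<forall>j. dd j \<le> (\<Sum>i\<in>UNIV. P$i$j * dd i)"
    and pi: "\<forall>S. irreducible_trapping_set P S \<longrightarrow> invariant_prob P S (\<pi> S)"
    and p: "1 \<le> p"
  shows "(\<Sum>i\<in>UNIV. \<bar>dd i\<bar> powr p) \<le> (\<Sum>S\<in>{S. irreducible_trapping_set P S}.
                   (Min ((\<lambda>i. w$i / \<pi> S i) ` S)) powr p * (\<Sum>i\<in>S. \<bar>\<pi> S i\<bar> powr p))"
proof -
  note sl = support_lemmas[OF nn rs dnn dsub]
  have "(\<Sum>i\<in>UNIV. \<bar>dd i\<bar> powr p) = (\<Sum>S\<in>{S. irreducible_trapping_set P S}. \<Sum>i\<in>S. \<bar>dd i\<bar> powr p)"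
  proof (rule decomp)
    show "\<forall>i. (\<forall>S. irreducible_trapping_set P S \<longrightarrow> i \<notin> S) \<longrightarrow> \<bar>dd i\<bar> powr p = 0"
    proof (intro allI impI)
      fix i assume "\<forall>S. irreducible_trapping_set P S \<longrightarrow> i \<notin> S"
      then have "\<not> dd i > 0" using sl by blast
      then have "dd i = 0" using dnn[rule_format, of i] by linarith
      then show "\<bar>dd i\<bar> powr p = 0" by simp
    qed
  qed
  also have "\<dots> \<le> (\<Sum>S\<in>{S. irreducible_trapping_set P S}.
                   (Min ((\<lambda>i. w$i / \<pi> S i) ` S)) powr p * (\<Sum>i\<in>S. \<bar>\<pi> S i\<bar> powr p))"
  proof (rule sum_mono)
    fix S assume "S \<in> {S. irreducible_trapping_set P S}"
    then have irr: "irreducible_trapping_set P S" by simp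
    show "(\<Sum>i\<in>S. \<bar>dd i\<bar> powr p) \<le> (Min ((\<lambda>i. w$i / \<pi> S i) ` S)) powr p * (\<Sum>i\<in>S. \<bar>\<pi> S i\<bar> powr p)"
      by (rule per_S[OF nn irr pi[rule_format, OF irr] dnn dw _ _ p]) (use sl in blast)+
  qed
  finally show ?thesis .
qed

theorem corollary2:
  fixes P :: "real^'n^'n" and w :: "real^'n" and p :: real
    and xlo xhi :: "real^'n \<Rightarrow> real^'n"
    and \<pi> :: "'n set \<Rightarrow> 'n \<Rightarrow> real"
  assumes "substochastic P"
    and "\<forall>i. 0 \<le> w$i"
    and "1 \<le> p"
    and "\<forall>c. is_min_solution P w c (xlo c)"
    and "\<forall>c. is_max_solution P w c (xhi c)"
    and "\<forall>S. irreducible_trapping_set P S \<longrightarrow> invariant_prob P S (\<pi> S)"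
  shows "let R = (\<Sum>S\<in>{S. irreducible_trapping_set P S}.
                   (Min ((\<lambda>i. w$i / \<pi> S i) ` S)) powr p * (\<Sum>i\<in>S. \<bar>\<pi> S i\<bar> powr p))
         in (\<forall>c. pnorm_pow p (xhi c - xlo c) \<le> R) \<and> (\<exists>c. pnorm_pow p (xhi c - xlo c) = R)"
proof -
  note w0 = assms(2) and p = assms(3) and pi = assms(6)
  have nn: "\<forall>i j. 0 \<le> P$i$j" and rs: "\<forall>i. (\<Sum>j\<in>UNIV. P$i$j) \<le> 1"
    using assms(1) unfolding substochastic_def by auto
  define R where "R = (\<Sum>S\<in>{S. irreducible_trapping_set P S}.
                   (Min ((\<lambda>i. w$i / \<pi> S i) ` S)) powr p * (\<Sum>i\<in>S. \<bar>\<pi> S i\<bar> powr p))"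
  have solcomp: "x$i = min (max ((\<Sum>k\<in>UNIV. P$k$i * x$k) + c$i) 0) (w$i)"
    if "is_solution P w c x" for x c i
  proof -
    have "x$i = sat0 w (transpose P *v x + c) $ i" using that unfolding is_solution_def by simp
    then show ?thesis using tr_mult[of P x i] by (simp add: sat0_def)
  qed
  have upb: "pnorm_pow p (xhi c - xlo c) \<le> R" for c
  proof -
    define x1 where "x1 = xlo c"
    define x2 where "x2 = xhi c"
    have s1: "is_solution P w c x1" and m1: "\<forall>y. is_solution P w c y \<longrightarrow> vec_le x1 y"
      using assms(4) unfolding x1_def is_min_solution_def by auto
    have s2: "is_solution P w c x2"
      using assms(5) unfolding x2_def is_max_solution_def by auto
    define dd where "dd i = x2$i - x1$i" for i
    have dnn: "\<forall>i. 0 \<le> dd i" using m1 s2 unfolding vec_le_def dd_def by auto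
    have dw: "\<forall>i. dd i \<le> w$i"
    proof
      fix i
      have "x2$i \<le> w$i" using solcomp[OF s2, of i] by simp
      moreover have "0 \<le> x1$i" using solcomp[OF s1, of i] w0 by simp
      ultimately show "dd i \<le> w$i" unfolding dd_def by simp
    qed
    have dsub: "\<forall>j. dd j \<le> (\<Sum>i\<in>UNIV. P$i$j * dd i)"
    proof
      fix j
      have eq: "(\<Sum>i\<in>UNIV. P$i$j * dd i) = ((\<Sum>k\<in>UNIV. P$k$j * x2$k) + c$j) - ((\<Sum>k\<in>UNIV. P$k$j * x1$k) + c$j)"
        unfolding dd_def by (simp add: right_diff_distrib sum_subtractf)
      have ge: "0 \<le> (\<Sum>i\<in>UNIV. P$i$j * dd i)" using nn dnn by (simp add: sum_nonneg)
      have "dd j \<le> \<bar>((\<Sum>k\<in>UNIV. P$k$j * x2$k) + c$j) - ((\<Sum>k\<in>UNIV. P$k$j * x1$k) + c$j)\<bar>"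
        unfolding dd_def solcomp[OF s1, of j] solcomp[OF s2, of j] by (rule sat_lip)
      then show "dd j \<le> (\<Sum>i\<in>UNIV. P$i$j * dd i)" using eq ge by simp
    qed
    have "pnorm_pow p (xhi c - xlo c) = (\<Sum>i\<in>UNIV. \<bar>dd i\<bar> powr p)"
      unfolding pnorm_pow_def dd_def x1_def x2_def by simp
    also have "\<dots> \<le> R" unfolding R_def by (rule upper[OF nn rs dnn dw dsub pi p])
    finally show ?thesis .
  qed
  define C where "C = {S. irreducible_trapping_set P S}"
  define t where "t S = Min ((\<lambda>i. w$i / \<pi> S i) ` S)" for S
  define g where "g j = (\<Sum>S\<in>C. if j \<in> S then t S * \<pi> S j else 0)" for j
  have qpos: "\<pi> S i > 0" if "S \<in> C" "i \<in> S" for S i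
    using pi_pos[OF nn _ pi[rule_format]] that unfolding C_def by blast
  have tb: "0 \<le> t S \<and> (\<forall>j\<in>S. t S * \<pi> S j \<le> w$j)" if SC: "S \<in> C" for S
  proof -
    have Sne: "S \<noteq> {}" using SC unfolding C_def irreducible_trapping_set_def trapping_set_def by blast
    have "t S \<in> (\<lambda>i. w$i / \<pi> S i) ` S" unfolding t_def using Sne by (intro Min_in) auto
    then obtain k where k: "k \<in> S" "t S = w$k / \<pi> S k" by blast
    have t0: "0 \<le> t S" using k w0[rule_format, of k] qpos[OF SC k(1)] by (simp add: less_imp_le)
    have "t S * \<pi> S j \<le> w$j" if j: "j \<in> S" for j
    proof -
      have "t S \<le> w$j / \<pi> S j" unfolding t_def using j by simp
      then show ?thesis using qpos[OF SC j] by (simp add: pos_le_divide_eq)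
    qed
    then show ?thesis using t0 by blast
  qed
  have gS: "g j = t S * \<pi> S j" if SC: "S \<in> C" and j: "j \<in> S" for S j
  proof -
    have "{S'\<in>C. j \<in> S'} = {S}" using irr_eq SC j unfolding C_def by blast
    then have "(\<Sum>S'\<in>{S'\<in>C. j \<in> S'}. t S' * \<pi> S' j) = t S * \<pi> S j" by simp
    moreover have "(\<Sum>S'\<in>{S'\<in>C. j \<in> S'}. t S' * \<pi> S' j) = g j"
      unfolding g_def by (rule sum.inter_filter) simp
    ultimately show ?thesis by simp
  qed
  have gout: "g j = 0" if "\<forall>S\<in>C. j \<notin> S" for j
    unfolding g_def using that by simp
  have gb: "0 \<le> g j \<and> g j \<le> w$j" for j
  proof (cases "\<exists>S\<in>C. j \<in> S")
    case True
    then obtain S where S: "S \<in> C" "j \<in> S" by blast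
    show ?thesis using gS[OF S] tb[OF S(1)] S(2) qpos[OF S] by (simp add: less_imp_le)
  next
    case False
    then show ?thesis using gout w0 by auto
  qed
  have inner: "(\<Sum>i\<in>UNIV. P$i$j * (if i \<in> S then t S * \<pi> S i else 0)) = (if j \<in> S then t S * \<pi> S j else 0)"
    if SC: "S \<in> C" for S j
  proof -
    have "(\<Sum>i\<in>UNIV. P$i$j * (if i \<in> S then t S * \<pi> S i else 0)) = (\<Sum>i\<in>UNIV. if i \<in> S then P$i$j * (t S * \<pi> S i) else 0)"
      by (rule sum.cong) auto
    also have "\<dots> = (\<Sum>i\<in>S. P$i$j * (t S * \<pi> S i))"
      using sum.inter_filter[of UNIV "\<lambda>i. P$i$j * (t S * \<pi> S i)" "\<lambda>i. i \<in> S"] by simp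
    also have "\<dots> = t S * (\<Sum>i\<in>S. P$i$j * \<pi> S i)" by (simp add: sum_distrib_left algebra_simps)
    also have "\<dots> = (if j \<in> S then t S * \<pi> S j else 0)"
    proof (cases "j \<in> S")
      case True
      then show ?thesis using pi[rule_format, of S] SC unfolding C_def invariant_prob_def by simp
    next
      case False
      have "\<forall>i\<in>S. P$i$j = 0"
      proof
        fix i assume "i \<in> S"
        then have "\<not> link P i j" using SC False unfolding C_def irreducible_trapping_set_def trapping_set_def by blast
        then show "P$i$j = 0" using nn[rule_format, of i j] unfolding link_def by simp
      qed
      then show ?thesis using False by simp
    qed
    finally show ?thesis .
  qed
  have gP: "(\<Sum>i\<in>UNIV. P$i$j * g i) = g j" for j
  proof -
    have "(\<Sum>i\<in>UNIV. P$i$j * g i) = (\<Sum>i\<in>UNIV. \<Sum>S\<in>C. P$i$j * (if i \<in> S then t S * \<pi> S i else 0))"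
      unfolding g_def by (simp add: sum_distrib_left)
    also have "\<dots> = (\<Sum>S\<in>C. \<Sum>i\<in>UNIV. P$i$j * (if i \<in> S then t S * \<pi> S i else 0))"
      by (rule sum.swap)
    also have "\<dots> = g j" unfolding g_def by (rule sum.cong) (simp_all add: inner)
    finally show ?thesis .
  qed
  define xs :: "real^'n" where "xs = (\<chi> j. g j)"
  have xs_sol: "is_solution P w 0 xs"
    unfolding is_solution_def
  proof (subst vec_eq_iff, rule allI)
    fix j
    have "sat0 w (transpose P *v xs + 0) $ j = min (max (\<Sum>i\<in>UNIV. P$i$j * g i) 0) (w$j)"
      using tr_mult[of P xs j] unfolding sat0_def xs_def by simp
    also have "\<dots> = g j" using gP[of j] gb[of j] by simp
    finally show "xs $ j = sat0 w (transpose P *v xs + 0) $ j" unfolding xs_def by simp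
  qed
  have z_sol: "is_solution P w 0 0"
    unfolding is_solution_def sat0_def using w0 by (simp add: vec_eq_iff)
  have lo0: "xlo 0 $ i = 0" for i
  proof -
    have "vec_le (xlo 0) 0" using assms(4) z_sol unfolding is_min_solution_def by blast
    then have "xlo 0 $ i \<le> 0" unfolding vec_le_def by (metis zero_index)
    moreover have sl0: "is_solution P w 0 (xlo 0)" using assms(4) unfolding is_min_solution_def by auto
    then have "0 \<le> xlo 0 $ i" using solcomp[OF sl0, of i] w0[rule_format, of i] by simp
    ultimately show ?thesis by simp
  qed
  have hi0: "g i \<le> xhi 0 $ i" for i
  proof -
    have "vec_le xs (xhi 0)" using assms(5) xs_sol unfolding is_max_solution_def by blast
    then show ?thesis unfolding vec_le_def xs_def by (metis vec_lambda_beta)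
  qed
  have "R = (\<Sum>S\<in>C. \<Sum>i\<in>S. \<bar>g i\<bar> powr p)"
    unfolding R_def C_def
  proof (rule sum.cong)
    fix S assume SC': "S \<in> {S. irreducible_trapping_set P S}"
    then have SC: "S \<in> C" unfolding C_def by simp
    have "(\<Sum>i\<in>S. \<bar>g i\<bar> powr p) = (\<Sum>i\<in>S. t S powr p * \<bar>\<pi> S i\<bar> powr p)"
    proof (rule sum.cong)
      fix i assume i: "i \<in> S"
      have "\<bar>g i\<bar> = t S * \<bar>\<pi> S i\<bar>" using gS[OF SC i] tb[OF SC] qpos[OF SC i] by (simp add: abs_mult)
      then show "\<bar>g i\<bar> powr p = t S powr p * \<bar>\<pi> S i\<bar> powr p" using tb[OF SC] by (simp add: powr_mult)
    qed simp
    then show "Min ((\<lambda>i. w$i / \<pi> S i) ` S) powr p * (\<Sum>i\<in>S. \<bar>\<pi> S i\<bar> powr p) = (\<Sum>i\<in>S. \<bar>g i\<bar> powr p)"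
      unfolding t_def by (simp add: sum_distrib_left)
  qed simp
  also have "\<dots> = (\<Sum>i\<in>UNIV. \<bar>g i\<bar> powr p)"
    unfolding C_def by (rule decomp[symmetric]) (use gout C_def in auto)
  also have "\<dots> \<le> pnorm_pow p (xhi 0 - xlo 0)"
    unfolding pnorm_pow_def
  proof (rule sum_mono)
    fix i
    show "\<bar>g i\<bar> powr p \<le> \<bar>(xhi 0 - xlo 0) $ i\<bar> powr p"
      using gb[of i] hi0[of i] lo0[of i] p by (simp add: powr_mono2)
  qed
  finally have "R \<le> pnorm_pow p (xhi 0 - xlo 0)" .
  then have "pnorm_pow p (xhi 0 - xlo 0) = R" using upb[of 0] by simp
  then show ?thesis using upb unfolding R_def Let_def by blast
qed


end
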